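(* In the probabilistic Outcome Logic instance, let $C$ be a program (terminating after finitely many steps), $\varphi$ an outcome assertion, $A_1,\ldots,A_n$ state assertions that are pairwise disjoint (for $i\neq j$ no state satisfies $A_i\land A_j$), $p_1,\ldots,p_n\in[0,1]$, and $A_0=\bigwedge_{i=1}^n\lnot A_i$. Then $\not\vDash\langle\varphi\rangle\,C\,\langle\bigoplus_{i=1}^n(\mathbb{P}[A_i]=p_i)\rangle$ iff there exist $q_0,\ldots,q_n\in[0,1]$ and an outcome assertion $\varphi'$ with $\varphi'\Rightarrow\varphi$ and $\mathsf{sat}(\varphi')$ such that $\vDash\langle\varphi'\rangle\,C\,\langle\bigoplus_{i=0}^n(\mathbb{P}[A_i]=q_i)\rangle$ and either $q_0\neq0$ or $q_i\neq p_i$ for some $i\in\{1,\ldots,n\}$.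
   Context: A subdistribution on a countable set $X$ is $\mu\colon X\to[0,1]$ with mass $|\mu|=\sum_x\mu(x)\le1$; $\mathsf{supp}(\mu)=\{x:\mu(x)>0\}$; $\varnothing$ is the zero subdistribution; $\mu_1+\mu_2$ is pointwise sum, defined iff $|\mu_1|+|\mu_2|\le1$. Probabilistic execution model: $\mathsf{bind}(\mu,k)=\sum_{x\in\mathsf{supp}(\mu)}\mu(x)\cdot k(x)$, $\mathsf{unit}(x)=\delta_x$ (Dirac), monoid $(+,\varnothing)$. Program states are variable stores $\sigma\colon\mathsf{Var}\to\mathsf{Val}$. Atomic commands: $\mathsf{assume}\ e$ ($\delta_\sigma$ if $e$ true in $\sigma$, else $\varnothing$), $x:=e$, and sampling $x\,{\leftarrow}\,\eta$ for finitely supported $\eta$ on values, with $[\![x\leftarrow\eta]\!](\sigma)=\mathsf{bind}(\eta,\lambda v.[\![x:=v]\!](\sigma))$. Programs are built with $\mathbb{0},\mathbb{1}$, sequencing ($[\![C_1;C_2]\!](\sigma)=\mathsf{bind}([\![C_1]\!](\sigma),[\![C_2]\!])$), and choice and iteration only in the guarded forms $\mathsf{if}\ e\ \mathsf{then}\ C_1\ \mathsf{else}\ C_2=(\mathsf{assume}\ e;C_1)+(\mathsf{assume}\ \lnot e;C_2)$ and $\mathsf{while}\ e\ \mathsf{do}\ C=(\mathsf{assume}\ e;C)^\star;\mathsf{assume}\ \lnot e$, where $+$ is interpreted by $+$ on subdistributions and $C^\star$ as the least fixed point of $f\mapsto\lambda\sigma.f^\dagger([\![C]\!](\sigma))+\delta_\sigma$,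 $f^\dagger(\mu)=\mathsf{bind}(\mu,f)$. State assertions $A$ have a relation $\sigma\vDash A$ and are closed under $\land,\lnot$. Atomic outcome assertions are $\mathbb{P}[A]=p$, with $\mu\vDash\mathbb{P}[A]=p$ iff $|\mu|=p$ and every $\sigma\in\mathsf{supp}(\mu)$ satisfies $A$. Outcome assertions are built with $\top,\bot,\top^\oplus$ ($\mu\vDash\top^\oplus$ iff $\mu=\varnothing$), classical $\land,\Rightarrow$, and $\oplus$ ($\mu\vDash\varphi\oplus\psi$ iff $\mu=\mu_1+\mu_2$ with $\mu_1\vDash\varphi$, $\mu_2\vDash\psi$). $\vDash\langle\varphi\rangle C\langle\psi\rangle$ iff every $\mu\vDash\varphi$ has $[\![C]\!]^\dagger(\mu)\vDash\psi$. $\varphi'\Rightarrow\varphi$ means every $\mu$ satisfying $\varphi'$ satisfies $\varphi$; $\mathsf{sat}(\varphi')$ means some $\mu$ satisfies $\varphi'$. *)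

theory Defs
  imports "HOL-Probability.Probability_Mass_Function"
begin

section \<open>Subdistributions (values in ennreal, so that lfp is available)\<close>

type_synonym ('x,'v) state = "'x \<Rightarrow> 'v"
type_synonym 'a sd = "'a \<Rightarrow> ennreal"

definition mass :: "'a sd \<Rightarrow> ennreal" where
  "mass \<mu> = (\<Sum>\<^sub>\<infinity>x. \<mu> x)"

definition subdist :: "'a sd \<Rightarrow> bool" where
  "subdist \<mu> \<longleftrightarrow> mass \<mu> \<le> 1"

definition szero :: "'a sd" where
  "szero = (\<lambda>_. 0)"

definition splus :: "'a sd \<Rightarrow> 'a sd \<Rightarrow> 'a sd" where
  "splus \<mu>1 \<mu>2 = (\<lambda>x. \<mu>1 x + \<mu>2 x)"

definition dirac :: "'a \<Rightarrow> 'a sd" where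
  "dirac x = (\<lambda>y. if y = x then 1 else 0)"

definition sbind :: "'a sd \<Rightarrow> ('a \<Rightarrow> 'b sd) \<Rightarrow> 'b sd" where
  "sbind \<mu> k = (\<lambda>y. \<Sum>\<^sub>\<infinity>x. \<mu> x * k x y)"

datatype ('x,'v) cmd =
    CZero
  | COne
  | CAssume "('x,'v) state \<Rightarrow> bool"
  | CAssign 'x "('x,'v) state \<Rightarrow> 'v"
  | CSample 'x "'v pmf"
  | CSeq "('x,'v) cmd" "('x,'v) cmd"
  | CIf "('x,'v) state \<Rightarrow> bool" "('x,'v) cmd" "('x,'v) cmd"
  | CWhile "('x,'v) state \<Rightarrow> bool" "('x,'v) cmd"

definition sassume :: "('a \<Rightarrow> bool) \<Rightarrow> 'a \<Rightarrow> 'a sd" where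
  "sassume e \<sigma> = (if e \<sigma> then dirac \<sigma> else szero)"

definition star_F :: "('a \<Rightarrow> 'a sd) \<Rightarrow> ('a \<Rightarrow> 'a sd) \<Rightarrow> ('a \<Rightarrow> 'a sd)" where
  "star_F c f = (\<lambda>\<sigma>. splus (sbind (c \<sigma>) f) (dirac \<sigma>))"

text \<open>None: the true semantics (least fixed point); Some N: every loop cut off
  after N Kleene iterations (used only to define termination).\<close>
definition star_sem :: "nat option \<Rightarrow> ('a \<Rightarrow> 'a sd) \<Rightarrow> ('a \<Rightarrow> 'a sd)" where
  "star_sem m c = (case m of None \<Rightarrow> lfp (star_F c)
                     | Some N \<Rightarrow> ((star_F c) ^^ N) (\<lambda>_. szero))"

primrec den :: "nat option \<Rightarrow> ('x,'v) cmd \<Rightarrow> ('x,'v) state \<Rightarrow> ('x,'v) state sd" where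
  "den m CZero \<sigma> = szero"
| "den m COne \<sigma> = dirac \<sigma>"
| "den m (CAssume e) \<sigma> = sassume e \<sigma>"
| "den m (CAssign x e) \<sigma> = dirac (\<sigma>(x := e \<sigma>))"
| "den m (CSample x \<eta>) \<sigma> = sbind (\<lambda>v. ennreal (pmf \<eta> v)) (\<lambda>v. dirac (\<sigma>(x := v)))"
| "den m (CSeq c1 c2) \<sigma> = sbind (den m c1 \<sigma>) (den m c2)"
| "den m (CIf e c1 c2) \<sigma> =
     splus (sbind (sassume e \<sigma>) (den m c1)) (sbind (sassume (\<lambda>s. \<not> e s) \<sigma>) (den m c2))"
| "den m (CWhile e c) \<sigma> =
     sbind (star_sem m (\<lambda>s. sbind (sassume e s) (den m c)) \<sigma>) (sassume (\<lambda>s. \<not> e s))"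

definition sem :: "('x,'v) cmd \<Rightarrow> ('x,'v) state \<Rightarrow> ('x,'v) state sd" where
  "sem c = den None c"

primrec wf_cmd :: "('x,'v) cmd \<Rightarrow> bool" where
  "wf_cmd CZero = True"
| "wf_cmd COne = True"
| "wf_cmd (CAssume e) = True"
| "wf_cmd (CAssign x e) = True"
| "wf_cmd (CSample x \<eta>) = finite (set_pmf \<eta>)"
| "wf_cmd (CSeq c1 c2) = (wf_cmd c1 \<and> wf_cmd c2)"
| "wf_cmd (CIf e c1 c2) = (wf_cmd c1 \<and> wf_cmd c2)"
| "wf_cmd (CWhile e c) = wf_cmd c"

definition terminating :: "('x,'v) cmd \<Rightarrow> bool" where
  "terminating c \<longleftrightarrow> (\<forall>\<sigma>. \<exists>N. den (Some N) c \<sigma> = sem c \<sigma>)"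

datatype 'a oassn =
    OTop
  | OBot
  | OTopPlus
  | OAnd "'a oassn" "'a oassn"
  | OImp "'a oassn" "'a oassn"
  | OPlus "'a oassn" "'a oassn"
  | OProb "'a \<Rightarrow> bool" real

primrec osat :: "'a sd \<Rightarrow> 'a oassn \<Rightarrow> bool" where
  "osat \<mu> OTop = True"
| "osat \<mu> OBot = False"
| "osat \<mu> OTopPlus = (\<mu> = szero)"
| "osat \<mu> (OAnd \<phi> \<psi>) = (osat \<mu> \<phi> \<and> osat \<mu> \<psi>)"
| "osat \<mu> (OImp \<phi> \<psi>) = (osat \<mu> \<phi> \<longrightarrow> osat \<mu> \<psi>)"
| "osat \<mu> (OPlus \<phi> \<psi>) = (\<exists>\<mu>1 \<mu>2. subdist \<mu>1 \<and> subdist \<mu>2 \<and> \<mu> = splus \<mu>1 \<mu>2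
                               \<and> osat \<mu>1 \<phi> \<and> osat \<mu>2 \<psi>)"
| "osat \<mu> (OProb A p) = (0 \<le> p \<and> mass \<mu> = ennreal p \<and> (\<forall>\<sigma>. \<mu> \<sigma> \<noteq> 0 \<longrightarrow> A \<sigma>))"

fun big_oplus :: "'a oassn list \<Rightarrow> 'a oassn" where
  "big_oplus [] = OTopPlus"
| "big_oplus [\<phi>] = \<phi>"
| "big_oplus (\<phi> # \<psi>s) = OPlus \<phi> (big_oplus \<psi>s)"

definition ol_valid :: "('x,'v) state oassn \<Rightarrow> ('x,'v) cmd \<Rightarrow> ('x,'v) state oassn \<Rightarrow> bool" where
  "ol_valid \<phi> c \<psi> \<longleftrightarrow> (\<forall>\<mu>. subdist \<mu> \<longrightarrow> osat \<mu> \<phi> \<longrightarrow> osat (sbind \<mu> (sem c)) \<psi>)"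

definition oentails :: "'a oassn \<Rightarrow> 'a oassn \<Rightarrow> bool" where
  "oentails \<phi>' \<phi> \<longleftrightarrow> (\<forall>\<mu>. subdist \<mu> \<longrightarrow> osat \<mu> \<phi>' \<longrightarrow> osat \<mu> \<phi>)"

definition satisfiable :: "'a oassn \<Rightarrow> bool" where
  "satisfiable \<phi> \<longleftrightarrow> (\<exists>\<mu>. subdist \<mu> \<and> osat \<mu> \<phi>)"

end

theory Submission imports Defs begin

lemma ss_nn:
  fixes f :: "'a \<Rightarrow> ennreal"
  shows "infsum f UNIV = (\<integral>\<^sup>+x. f x \<partial>count_space UNIV)"
proof (rule antisym)
  have sup: "infsum f UNIV = (SUP F\<in>{F. finite F \<and> F \<subseteq> UNIV}. sum f F)"
    by (rule nonneg_infsum_complete) simp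
  show "infsum f UNIV \<le> (\<integral>\<^sup>+x. f x \<partial>count_space UNIV)"
    unfolding sup
  proof (rule SUP_least)
    fix F :: "'a set" assume "F \<in> {F. finite F \<and> F \<subseteq> UNIV}"
    then have fin: "finite F" by simp
    have "sum f F = (\<integral>\<^sup>+x. f x \<partial>count_space F)" using fin by (simp add: nn_integral_count_space_finite)
    also have "\<dots> = (\<integral>\<^sup>+x. f x * indicator F x \<partial>count_space UNIV)"
      by (rule nn_integral_count_space_indicator) simp
    also have "\<dots> \<le> (\<integral>\<^sup>+x. f x \<partial>count_space UNIV)"
      by (intro nn_integral_mono) (auto split: split_indicator)
    finally show "sum f F \<le> (\<integral>\<^sup>+x. f x \<partial>count_space UNIV)" .
  qed
  show "(\<integral>\<^sup>+x. f x \<partial>count_space UNIV) \<le> infsum f UNIV"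
  proof (cases "countable {x. f x \<noteq> 0}")
    case True
    define S where "S = {x. f x \<noteq> 0}"
    have eq: "(\<integral>\<^sup>+x. f x \<partial>count_space UNIV) = (\<integral>\<^sup>+x. f x \<partial>count_space S)"
      by (rule nn_integral_count_space_eq) (auto simp: S_def)
    show ?thesis
    proof (cases "finite S")
      case True
      then have "(\<integral>\<^sup>+x. f x \<partial>count_space S) = sum f S" by (simp add: nn_integral_count_space_finite)
      also have "\<dots> \<le> infsum f UNIV" unfolding sup using True by (intro SUP_upper) auto
      finally show ?thesis using eq by simp
    next
      case False
      define g where "g = from_nat_into S"
      have bij: "bij_betw g UNIV S" unfolding g_def
        using bij_betw_from_nat_into[of S] True False by (simp add: S_def)
      have "(\<integral>\<^sup>+x. f x \<partial>count_space S) = (\<integral>\<^sup>+n. f (g n) \<partial>count_space UNIV)"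
        by (rule nn_integral_bij_count_space[symmetric, OF bij])
      also have "\<dots> = (\<Sum>n. f (g n))" by (rule nn_integral_count_space_nat)
      also have "\<dots> = (SUP n. \<Sum>i<n. f (g i))" by (rule suminf_eq_SUP)
      also have "\<dots> \<le> infsum f UNIV"
      proof (rule SUP_least)
        fix n :: nat
        have inj: "inj g" using bij by (simp add: bij_betw_def)
        have "(\<Sum>i<n. f (g i)) = sum f (g ` {..<n})"
          by (simp add: sum.reindex[OF inj_on_subset[OF inj]])
        also have "\<dots> \<le> infsum f UNIV" unfolding sup by (intro SUP_upper) auto
        finally show "(\<Sum>i<n. f (g i)) \<le> infsum f UNIV" .
      qed
      finally show ?thesis using eq by simp
    qed
  next
    case False
    have "\<exists>m::nat. infinite {x. ennreal (inverse (Suc m)) \<le> f x}"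
    proof (rule ccontr)
      assume "\<not> ?thesis"
      then have fin: "\<And>m::nat. finite {x. ennreal (inverse (Suc m)) \<le> f x}" by blast
      have "{x. f x \<noteq> 0} \<subseteq> (\<Union>m. {x. ennreal (inverse (Suc m)) \<le> f x})"
      proof
        fix x assume "x \<in> {x. f x \<noteq> 0}"
        then have "f x > 0" by (simp add: zero_less_iff_neq_zero)
        show "x \<in> (\<Union>m. {x. ennreal (inverse (Suc m)) \<le> f x})"
        proof (cases "f x = top")
          case True then show ?thesis by auto
        next
          case False
          then obtain r where r: "f x = ennreal r" "r \<ge> 0" by (cases "f x") auto
          with \<open>f x > 0\<close> have "r > 0" by auto
          then obtain m where "inverse (real (Suc m)) < r" using reals_Archimedean by blast
          then have "ennreal (inverse (Suc m)) \<le> f x" using r by (simp add: ennreal_leI)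
          then show ?thesis by auto
        qed
      qed
      moreover have "countable (\<Union>m. {x. ennreal (inverse (Suc m)) \<le> f x})"
        using fin by (intro countable_UN) (auto intro: countable_finite)
      ultimately show False using False countable_subset by blast
    qed
    then obtain m where m: "infinite {x. ennreal (inverse (Suc m)) \<le> f x}" by blast
    have "infsum f {x. ennreal (inverse (Suc m)) \<le> f x} = \<infinity>"
      by (rule infsum_superconst_infinite_ennreal[where b="ennreal (inverse (Suc m))"]) (use m in auto)
    moreover have "infsum f {x. ennreal (inverse (Suc m)) \<le> f x} \<le> infsum f UNIV"
      by (rule infsum_mono_neutral) (auto intro: nonneg_summable_on_complete)
    ultimately show ?thesis by (simp add: top_unique)
  qed
qed


lemma ss_add: "infsum (\<lambda>x. f x + g x) UNIV = infsum f UNIV + infsum (g::'a \<Rightarrow> ennreal) UNIV"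
  by (simp add: ss_nn nn_integral_add)

lemma ss_cmult: "infsum (\<lambda>x. c * f x) UNIV = c * infsum (f::'a \<Rightarrow> ennreal) UNIV"
  by (simp add: ss_nn nn_integral_cmult)

lemma ss_cmult_right: "infsum (\<lambda>x. f x * c) UNIV = infsum (f::'a \<Rightarrow> ennreal) UNIV * c"
  using ss_cmult[of c f] by (simp add: mult.commute)

lemma ss_mono: "(\<And>x. f x \<le> g x) \<Longrightarrow> infsum f UNIV \<le> infsum (g::'a \<Rightarrow> ennreal) UNIV"
  by (simp add: ss_nn nn_integral_mono)

lemma ss_swap: "infsum (\<lambda>x. infsum (\<lambda>y. f x y) UNIV) UNIV = infsum (\<lambda>y. infsum (\<lambda>x. (f x y::ennreal)) UNIV) UNIV"
proof -
  have "infsum (\<lambda>x. infsum (\<lambda>y. f x y) UNIV) UNIV = (\<integral>\<^sup>+ x. \<integral>\<^sup>+ y. (case_prod f) (x, y) \<partial>count_space UNIV \<partial>count_space UNIV)"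
    by (simp add: ss_nn)
  also have "\<dots> = integral\<^sup>N (count_space UNIV) (case_prod f)" by (rule nn_integral_fst_count_space)
  also have "\<dots> = (\<integral>\<^sup>+ y. \<integral>\<^sup>+ x. (case_prod f) (x, y) \<partial>count_space UNIV \<partial>count_space UNIV)"
    by (rule nn_integral_snd_count_space[symmetric])
  also have "\<dots> = infsum (\<lambda>y. infsum (\<lambda>x. (f x y::ennreal)) UNIV) UNIV" by (simp add: ss_nn)
  finally show ?thesis .
qed

lemma ss_finite: "finite F \<Longrightarrow> (\<And>y. y \<notin> F \<Longrightarrow> f y = 0) \<Longrightarrow> infsum (f::'a \<Rightarrow> ennreal) UNIV = sum f F"
  by (simp add: ss_nn nn_integral_count_space')

lemma ss_single: "(\<And>y. y \<noteq> x \<Longrightarrow> f y = 0) \<Longrightarrow> infsum (f::'a \<Rightarrow> ennreal) UNIV = f x"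
  using ss_finite[of "{x}" f] by auto

lemma ss_point: "f x \<le> infsum (f::'a \<Rightarrow> ennreal) UNIV"
proof -
  have "f x = infsum (\<lambda>y. if y = x then f y else 0) UNIV" by (subst ss_single[of x]) auto
  also have "\<dots> \<le> infsum f UNIV" by (rule ss_mono) auto
  finally show ?thesis .
qed

lemma ss_zero_iff: "infsum (f::'a \<Rightarrow> ennreal) UNIV = 0 \<longleftrightarrow> (\<forall>x. f x = 0)"
proof
  assume "infsum f UNIV = 0" then show "\<forall>x. f x = 0" using ss_point[of f] by (metis le_zero_eq)
next
  assume "\<forall>x. f x = 0" then have "f = (\<lambda>_. 0)" by auto
  then show "infsum f UNIV = 0" by simp
qed

definition restr :: "'a sd \<Rightarrow> ('a \<Rightarrow> bool) \<Rightarrow> 'a sd" where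
  "restr \<nu> P = (\<lambda>\<sigma>. if P \<sigma> then \<nu> \<sigma> else 0)"

lemma mass_sbind: "mass (sbind \<mu> k) = infsum (\<lambda>x. \<mu> x * mass (k x)) UNIV"
  unfolding mass_def sbind_def
  by (subst ss_swap) (simp add: ss_cmult)

lemma restr_sbind: "restr (sbind \<mu> k) P = sbind \<mu> (\<lambda>x. restr (k x) P)"
  unfolding restr_def sbind_def by (auto intro!: ext)

lemma mass_restr_sbind: "mass (restr (sbind \<mu> k) P) = infsum (\<lambda>x. \<mu> x * mass (restr (k x) P)) UNIV"
  by (simp add: restr_sbind mass_sbind)

lemma sbind_dirac: "sbind (dirac s) k = k s"
  unfolding sbind_def dirac_def by (intro ext, subst ss_single[of s]) auto

lemma sbind_szero: "sbind szero k = szero"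
  unfolding sbind_def szero_def by simp

lemma sbind_sassume: "sbind (sassume e s) k = (if e s then k s else szero)"
  by (simp add: sassume_def sbind_dirac sbind_szero)

lemma mass_dirac[simp]: "mass (dirac s) = 1"
  unfolding mass_def dirac_def by (subst ss_single[of s]) auto

lemma mass_szero[simp]: "mass szero = 0"
  unfolding mass_def szero_def by simp

lemma mass_splus: "mass (splus a b) = mass a + mass b"
  unfolding mass_def splus_def by (rule ss_add)

lemma mass_sbind_le: "(\<And>x. mass (k x) \<le> 1) \<Longrightarrow> mass (sbind \<mu> k) \<le> mass \<mu>"
proof -
  assume h: "\<And>x. mass (k x) \<le> 1"
  have "mass (sbind \<mu> k) = infsum (\<lambda>x. \<mu> x * mass (k x)) UNIV" by (rule mass_sbind)
  also have "\<dots> \<le> infsum \<mu> UNIV" by (rule ss_mono) (use h in \<open>auto intro: mult_left_le\<close>)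
  finally show ?thesis by (simp add: mass_def)
qed

lemma mass_restr_le: "mass (restr \<nu> P) \<le> mass \<nu>"
  unfolding mass_def restr_def by (rule ss_mono) auto


lemma mass_sassume_le: "mass (sassume e s) \<le> 1"
  by (simp add: sassume_def)

lemma mass_sbind_sassume: "mass (sbind X (sassume P)) = mass (restr X P)"
proof -
  have "\<And>x. X x * mass (sassume P x) = (if P x then X x else 0)" by (simp add: sassume_def)
  then show ?thesis unfolding mass_sbind by (simp add: mass_def restr_def)
qed

lemma while_mass:
  assumes cc: "\<And>s. mass (cc s) \<le> 1"
  shows "mass (restr (((star_F (\<lambda>s. sbind (sassume e s) cc)) ^^ N) (\<lambda>_. szero) \<sigma>) (\<lambda>s. \<not> e s)) \<le> 1"
proof (induction N arbitrary: \<sigma>)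
  case 0
  then show ?case by (simp add: restr_def szero_def mass_def)
next
  case (Suc N)
  define X where "X = ((star_F (\<lambda>s. sbind (sassume e s) cc)) ^^ N) (\<lambda>_. szero)"
  have step: "((star_F (\<lambda>s. sbind (sassume e s) cc)) ^^ Suc N) (\<lambda>_. szero) \<sigma>
      = splus (sbind (sbind (sassume e \<sigma>) cc) X) (dirac \<sigma>)"
    by (simp add: X_def star_F_def)
  show ?case
  proof (cases "e \<sigma>")
    case True
    have "restr (splus (sbind (sbind (sassume e \<sigma>) cc) X) (dirac \<sigma>)) (\<lambda>s. \<not> e s)
        = restr (sbind (cc \<sigma>) X) (\<lambda>s. \<not> e s)"
      using True by (auto simp: restr_def splus_def dirac_def sbind_sassume intro!: ext)
    then have "mass (restr (((star_F (\<lambda>s. sbind (sassume e s) cc)) ^^ Suc N) (\<lambda>_. szero) \<sigma>) (\<lambda>s. \<not> e s))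
        = infsum (\<lambda>y. cc \<sigma> y * mass (restr (X y) (\<lambda>s. \<not> e s))) UNIV"
      unfolding step by (simp add: mass_restr_sbind)
    also have "\<dots> \<le> infsum (cc \<sigma>) UNIV"
      by (rule ss_mono) (use Suc.IH in \<open>auto simp: X_def intro: mult_left_le\<close>)
    also have "\<dots> \<le> 1" using cc[of \<sigma>] by (simp add: mass_def)
    finally show ?thesis .
  next
    case False
    have z: "sbind (sbind (sassume e \<sigma>) cc) X = szero"
      using False by (simp add: sbind_sassume sbind_szero)
    have "restr (splus (sbind (sbind (sassume e \<sigma>) cc) X) (dirac \<sigma>)) (\<lambda>s. \<not> e s) = dirac \<sigma>"
      unfolding z using False by (auto simp: restr_def splus_def dirac_def szero_def intro!: ext)
    then show ?thesis unfolding step by simp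
  qed
qed

lemma mass_pmf_le: "mass (\<lambda>v. ennreal (pmf \<eta> v)) \<le> 1"
  unfolding mass_def ss_nn by (simp add: nn_integral_pmf measure_pmf.emeasure_le_1)

lemma den_mass: "mass (den (Some N) c \<sigma>) \<le> 1"
proof (induction c arbitrary: \<sigma>)
  case (CSample x \<eta>)
  have "mass (den (Some N) (CSample x \<eta>) \<sigma>) \<le> mass (\<lambda>v. ennreal (pmf \<eta> v))"
    by simp (rule mass_sbind_le, simp)
  also have "\<dots> \<le> 1" by (rule mass_pmf_le)
  finally show ?case .
next
  case (CSeq c1 c2)
  have "mass (den (Some N) (CSeq c1 c2) \<sigma>) \<le> mass (den (Some N) c1 \<sigma>)"
    by simp (rule mass_sbind_le, rule CSeq.IH(2))
  also have "\<dots> \<le> 1" by (rule CSeq.IH(1))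
  finally show ?case .
next
  case (CIf e c1 c2)
  then show ?case by (simp add: mass_splus sbind_sassume)
next
  case (CWhile e c)
  show ?case
    using while_mass[where cc="den (Some N) c" and e=e and N=N and \<sigma>=\<sigma>, OF CWhile.IH]
    by (simp add: star_sem_def mass_sbind_sassume)
qed (simp_all add: mass_sassume_le)

lemma sem_mass: "terminating C \<Longrightarrow> mass (sem C \<sigma>) \<le> 1"
  unfolding terminating_def by (metis den_mass)


lemma subdist_restr: "subdist \<nu> \<Longrightarrow> subdist (restr \<nu> P)"
  unfolding subdist_def using mass_restr_le order_trans by blast

lemma BO_char:
  assumes "distinct js" "\<forall>i\<in>set js. \<forall>j\<in>set js. i \<noteq> j \<longrightarrow> (\<forall>\<sigma>. \<not> (B i \<sigma> \<and> B j \<sigma>))"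
    and "subdist \<nu>"
  shows "osat \<nu> (big_oplus (map (\<lambda>j. OProb (B j) (r j)) js)) \<longleftrightarrow>
         ((\<forall>\<sigma>. \<nu> \<sigma> \<noteq> 0 \<longrightarrow> (\<exists>j\<in>set js. B j \<sigma>)) \<and>
          (\<forall>j\<in>set js. 0 \<le> r j \<and> mass (restr \<nu> (B j)) = ennreal (r j)))"
  using assms
proof (induction js arbitrary: \<nu>)
  case Nil
  then show ?case by (auto simp: szero_def)
next
  case (Cons j js')
  note dis = Cons.prems(2)
  have jn: "j \<notin> set js'" and djs: "distinct js'" using Cons.prems(1) by auto
  show ?case
  proof (cases js')
    case Nil
    have "(\<forall>\<sigma>. \<nu> \<sigma> \<noteq> 0 \<longrightarrow> B j \<sigma>) \<Longrightarrow> restr \<nu> (B j) = \<nu>"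
      by (auto simp: restr_def intro!: ext)
    then show ?thesis using Nil by auto
  next
    case (Cons j2 rest)
    let ?\<psi> = "big_oplus (map (\<lambda>j. OProb (B j) (r j)) js')"
    have bo: "big_oplus (map (\<lambda>j. OProb (B j) (r j)) (j # js')) = OPlus (OProb (B j) (r j)) ?\<psi>"
      using Cons by simp
    have dis': "\<forall>i\<in>set js'. \<forall>j\<in>set js'. i \<noteq> j \<longrightarrow> (\<forall>\<sigma>. \<not> (B i \<sigma> \<and> B j \<sigma>))"
      using dis by simp
    have IH: "osat \<nu>2 ?\<psi> \<longleftrightarrow>
         ((\<forall>\<sigma>. \<nu>2 \<sigma> \<noteq> 0 \<longrightarrow> (\<exists>j\<in>set js'. B j \<sigma>)) \<and>
          (\<forall>j\<in>set js'. 0 \<le> r j \<and> mass (restr \<nu>2 (B j)) = ennreal (r j)))" if "subdist \<nu>2" for \<nu>2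
      using Cons.IH[OF djs dis' that] .
    show ?thesis
    proof
      assume "osat \<nu> (big_oplus (map (\<lambda>j. OProb (B j) (r j)) (j # js')))"
      then obtain \<nu>1 \<nu>2 where s1: "subdist \<nu>1" and s2: "subdist \<nu>2" and nu: "\<nu> = splus \<nu>1 \<nu>2"
        and o1: "0 \<le> r j" "mass \<nu>1 = ennreal (r j)" "\<forall>\<sigma>. \<nu>1 \<sigma> \<noteq> 0 \<longrightarrow> B j \<sigma>"
        and o2: "osat \<nu>2 ?\<psi>" unfolding bo by auto
      from IH[OF s2] o2 have sup2: "\<forall>\<sigma>. \<nu>2 \<sigma> \<noteq> 0 \<longrightarrow> (\<exists>j\<in>set js'. B j \<sigma>)"
        and m2: "\<forall>j\<in>set js'. 0 \<le> r j \<and> mass (restr \<nu>2 (B j)) = ennreal (r j)" by auto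
      have dj: "\<And>i \<sigma>. i \<in> set js' \<Longrightarrow> B i \<sigma> \<Longrightarrow> \<not> B j \<sigma>"
      proof -
        fix i \<sigma> assume i: "i \<in> set js'" "B i \<sigma>"
        then have "i \<noteq> j" using jn by auto
        then show "\<not> B j \<sigma>" using dis i by simp
      qed
      have a: "\<And>\<sigma>. B j \<sigma> \<Longrightarrow> \<nu>2 \<sigma> = 0"
        using sup2 dj by blast
      have b: "\<And>i \<sigma>. i \<in> set js' \<Longrightarrow> B i \<sigma> \<Longrightarrow> \<nu>1 \<sigma> = 0"
        using o1(3) dj by blast
      have r1: "restr \<nu> (B j) = \<nu>1"
        using a o1(3) by (auto simp: restr_def nu splus_def intro!: ext)
      have r2: "\<And>i. i \<in> set js' \<Longrightarrow> restr \<nu> (B i) = restr \<nu>2 (B i)"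
        using b by (auto simp: restr_def nu splus_def intro!: ext)
      show "(\<forall>\<sigma>. \<nu> \<sigma> \<noteq> 0 \<longrightarrow> (\<exists>j\<in>set (j # js'). B j \<sigma>)) \<and>
          (\<forall>j\<in>set (j # js'). 0 \<le> r j \<and> mass (restr \<nu> (B j)) = ennreal (r j))"
      proof
        show "\<forall>\<sigma>. \<nu> \<sigma> \<noteq> 0 \<longrightarrow> (\<exists>j\<in>set (j # js'). B j \<sigma>)"
          using o1(3) sup2 by (auto simp: nu splus_def)
        show "\<forall>i\<in>set (j # js'). 0 \<le> r i \<and> mass (restr \<nu> (B i)) = ennreal (r i)"
        proof
          fix i assume "i \<in> set (j # js')"
          then consider "i = j" | "i \<in> set js'" by auto
          then show "0 \<le> r i \<and> mass (restr \<nu> (B i)) = ennreal (r i)"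
          proof cases
            case 1 then show ?thesis using o1 r1 by simp
          next
            case 2 then show ?thesis using m2 r2[OF 2] by simp
          qed
        qed
      qed
    next
      assume rhs: "(\<forall>\<sigma>. \<nu> \<sigma> \<noteq> 0 \<longrightarrow> (\<exists>j\<in>set (j # js'). B j \<sigma>)) \<and>
          (\<forall>j\<in>set (j # js'). 0 \<le> r j \<and> mass (restr \<nu> (B j)) = ennreal (r j))"
      define \<nu>1 where "\<nu>1 = restr \<nu> (B j)"
      define \<nu>2 where "\<nu>2 = restr \<nu> (\<lambda>\<sigma>. \<not> B j \<sigma>)"
      have s1: "subdist \<nu>1" and s2: "subdist \<nu>2"
        unfolding \<nu>1_def \<nu>2_def using Cons.prems(3) by (auto intro: subdist_restr)
      have nu: "\<nu> = splus \<nu>1 \<nu>2" by (auto simp: \<nu>1_def \<nu>2_def restr_def splus_def intro!: ext)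
      have o1: "osat \<nu>1 (OProb (B j) (r j))" using rhs by (auto simp: \<nu>1_def restr_def)
      have r2: "\<And>i. i \<in> set js' \<Longrightarrow> restr \<nu>2 (B i) = restr \<nu> (B i)"
        using dis jn by (auto simp: \<nu>2_def restr_def intro!: ext)
      have "(\<forall>\<sigma>. \<nu>2 \<sigma> \<noteq> 0 \<longrightarrow> (\<exists>j\<in>set js'. B j \<sigma>))"
        using rhs by (auto simp: \<nu>2_def restr_def)
      moreover have "(\<forall>i\<in>set js'. 0 \<le> r i \<and> mass (restr \<nu>2 (B i)) = ennreal (r i))"
        using rhs r2 by simp
      ultimately have o2: "osat \<nu>2 ?\<psi>" using IH[OF s2] by blast
      show "osat \<nu> (big_oplus (map (\<lambda>j. OProb (B j) (r j)) (j # js')))"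
        unfolding bo osat.simps(6) using s1 s2 nu o1 o2 by blast
    qed
  qed
qed



primrec preds :: "'a oassn \<Rightarrow> ('a \<Rightarrow> bool) list" where
  "preds OTop = []"
| "preds OBot = []"
| "preds OTopPlus = []"
| "preds (OAnd a b) = preds a @ preds b"
| "preds (OImp a b) = preds a @ preds b"
| "preds (OPlus a b) = preds a @ preds b"
| "preds (OProb A p) = [A]"

definition cm :: "('a \<Rightarrow> 'k) \<Rightarrow> 'a sd \<Rightarrow> 'k \<Rightarrow> ennreal" where
  "cm K \<mu> k = mass (restr \<mu> (\<lambda>\<sigma>. K \<sigma> = k))"

lemma mass_fiber: "mass \<mu> = infsum (\<lambda>k. cm K \<mu> k) UNIV"
proof -
  have "infsum (\<lambda>k. cm K \<mu> k) UNIV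
     = infsum (\<lambda>k. infsum (\<lambda>\<sigma>. if K \<sigma> = k then \<mu> \<sigma> else 0) UNIV) UNIV"
    by (simp add: cm_def mass_def restr_def)
  also have "\<dots> = infsum (\<lambda>\<sigma>. infsum (\<lambda>k. if K \<sigma> = k then \<mu> \<sigma> else 0) UNIV) UNIV"
    by (rule ss_swap)
  also have "\<dots> = infsum (\<lambda>\<sigma>. \<mu> \<sigma>) UNIV"
  proof -
    have "\<And>\<sigma>. infsum (\<lambda>k. if K \<sigma> = k then \<mu> \<sigma> else 0) UNIV = \<mu> \<sigma>"
      by (subst ss_single[where x="K \<sigma>" for \<sigma>]) auto
    then show ?thesis by simp
  qed
  finally show ?thesis by (simp add: mass_def)
qed

lemma cm_point: "\<mu> \<sigma> \<le> cm K \<mu> (K \<sigma>)"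
proof -
  have "\<mu> \<sigma> = restr \<mu> (\<lambda>s. K s = K \<sigma>) \<sigma>" by (simp add: restr_def)
  also have "\<dots> \<le> cm K \<mu> (K \<sigma>)" unfolding cm_def mass_def by (rule ss_point)
  finally show ?thesis .
qed

lemma supp_transfer:
  assumes "\<forall>k. cm K m k = cm K m' k" "m' \<sigma> \<noteq> 0"
  shows "\<exists>\<tau>. K \<tau> = K \<sigma> \<and> m \<tau> \<noteq> 0"
proof (rule ccontr)
  assume "\<not> ?thesis"
  then have "\<forall>\<tau>. restr m (\<lambda>s. K s = K \<sigma>) \<tau> = 0" by (auto simp: restr_def)
  then have "cm K m (K \<sigma>) = 0" unfolding cm_def mass_def using ss_zero_iff by blast
  then have "cm K m' (K \<sigma>) = 0" using assms(1) by simp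
  then have "m' \<sigma> = 0" using cm_point[of m' \<sigma> K] by simp
  then show False using assms(2) by simp
qed

lemma supp_transfer2:
  assumes "\<forall>k. cm K m k = cm K m' k" "\<And>\<sigma> \<tau>. K \<sigma> = K \<tau> \<Longrightarrow> A \<sigma> \<Longrightarrow> A \<tau>"
  shows "\<forall>\<sigma>. m \<sigma> \<noteq> 0 \<longrightarrow> A \<sigma> \<Longrightarrow> \<forall>\<sigma>. m' \<sigma> \<noteq> 0 \<longrightarrow> A \<sigma>"
proof (intro allI impI)
  fix \<sigma> assume h: "\<forall>\<sigma>. m \<sigma> \<noteq> 0 \<longrightarrow> A \<sigma>" and "m' \<sigma> \<noteq> 0"
  then obtain \<tau> where "K \<tau> = K \<sigma>" "m \<tau> \<noteq> 0" using supp_transfer[OF assms(1)] by blast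
  then show "A \<sigma>" using h assms(2) by blast
qed

lemma cm_splus: "cm K (splus a b) k = cm K a k + cm K b k"
proof -
  have "restr (splus a b) (\<lambda>\<sigma>. K \<sigma> = k) = splus (restr a (\<lambda>\<sigma>. K \<sigma> = k)) (restr b (\<lambda>\<sigma>. K \<sigma> = k))"
    by (auto simp: restr_def splus_def intro!: ext)
  then show ?thesis by (simp add: cm_def mass_splus)
qed

lemma cm_le_1: "subdist m \<Longrightarrow> cm K m k \<le> 1"
  unfolding cm_def subdist_def using mass_restr_le order_trans by blast

lemma osat_inv:
  assumes "\<forall>B\<in>set (preds \<phi>). \<forall>\<sigma> \<tau>. K \<sigma> = K \<tau> \<longrightarrow> (B \<sigma> \<longleftrightarrow> B \<tau>)"
  shows "subdist \<mu> \<Longrightarrow> subdist \<mu>' \<Longrightarrow> (\<forall>k. cm K \<mu> k = cm K \<mu>' k) \<Longrightarrow> osat \<mu> \<phi> \<longleftrightarrow> osat \<mu>' \<phi>"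
  using assms
proof (induction \<phi> arbitrary: \<mu> \<mu>')
  case OTopPlus
  have h: "m = szero \<Longrightarrow> m' = szero" if "\<forall>k. cm K m k = cm K m' k" for m m'
    using supp_transfer[OF that] by (auto simp: szero_def intro!: ext)
  have sym: "\<forall>k. cm K \<mu>' k = cm K \<mu> k" using OTopPlus.prems(3) by simp
  show ?case unfolding osat.simps using h[OF OTopPlus.prems(3)] h[OF sym] by blast
next
  case (OAnd a b)
  have 1: "osat \<mu> a \<longleftrightarrow> osat \<mu>' a" by (rule OAnd.IH(1)) (use OAnd.prems in auto)
  have 2: "osat \<mu> b \<longleftrightarrow> osat \<mu>' b" by (rule OAnd.IH(2)) (use OAnd.prems in auto)
  show ?case unfolding osat.simps using 1 2 by blast
next
  case (OImp a b)
  have 1: "osat \<mu> a \<longleftrightarrow> osat \<mu>' a" by (rule OImp.IH(1)) (use OImp.prems in auto)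
  have 2: "osat \<mu> b \<longleftrightarrow> osat \<mu>' b" by (rule OImp.IH(2)) (use OImp.prems in auto)
  show ?case unfolding osat.simps using 1 2 by blast
next
  case (OProb A p)
  have sym: "\<forall>k. cm K \<mu>' k = cm K \<mu> k" using OProb.prems(3) by simp
  have e: "cm K \<mu> = cm K \<mu>'" using OProb.prems(3) by (auto intro!: ext)
  have "mass \<mu> = infsum (cm K \<mu>) UNIV" by (rule mass_fiber)
  also have "\<dots> = infsum (cm K \<mu>') UNIV" using e by simp
  also have "\<dots> = mass \<mu>'" by (rule mass_fiber[symmetric])
  finally have mm: "mass \<mu> = mass \<mu>'" .
  have Ain: "A \<in> set (preds (OProb A p))" by simp
  have AK0: "\<forall>\<sigma> \<tau>. K \<sigma> = K \<tau> \<longrightarrow> (A \<sigma> \<longleftrightarrow> A \<tau>)" using bspec[OF OProb.prems(4) Ain] .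
  have AK: "\<And>\<sigma> \<tau>. K \<sigma> = K \<tau> \<Longrightarrow> A \<sigma> \<Longrightarrow> A \<tau>"
  proof -
    fix \<sigma> \<tau> assume "K \<sigma> = K \<tau>" "A \<sigma>"
    then show "A \<tau>" using AK0 by metis
  qed
  have "(\<forall>\<sigma>. \<mu> \<sigma> \<noteq> 0 \<longrightarrow> A \<sigma>) \<Longrightarrow> (\<forall>\<sigma>. \<mu>' \<sigma> \<noteq> 0 \<longrightarrow> A \<sigma>)"
    by (rule supp_transfer2[where A=A, OF OProb.prems(3) AK])
  moreover have "(\<forall>\<sigma>. \<mu>' \<sigma> \<noteq> 0 \<longrightarrow> A \<sigma>) \<Longrightarrow> (\<forall>\<sigma>. \<mu> \<sigma> \<noteq> 0 \<longrightarrow> A \<sigma>)"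
    by (rule supp_transfer2[where A=A, OF sym AK])
  ultimately have "(\<forall>\<sigma>. \<mu> \<sigma> \<noteq> 0 \<longrightarrow> A \<sigma>) \<longleftrightarrow> (\<forall>\<sigma>. \<mu>' \<sigma> \<noteq> 0 \<longrightarrow> A \<sigma>)" by blast
  then show ?case unfolding osat.simps using mm by simp
next
  case (OPlus a b)
  have pa: "\<forall>B\<in>set (preds a). \<forall>\<sigma> \<tau>. K \<sigma> = K \<tau> \<longrightarrow> (B \<sigma> \<longleftrightarrow> B \<tau>)"
   and pb: "\<forall>B\<in>set (preds b). \<forall>\<sigma> \<tau>. K \<sigma> = K \<tau> \<longrightarrow> (B \<sigma> \<longleftrightarrow> B \<tau>)" using OPlus.prems(4) by auto
  have dir: "osat m' (OPlus a b)"
    if sm: "subdist m" and sm': "subdist m'" and eq: "\<forall>k. cm K m k = cm K m' k" and om: "osat m (OPlus a b)"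
    for m m'
  proof -
    from om obtain m1 m2 where s1: "subdist m1" and s2: "subdist m2" and mm: "m = splus m1 m2"
      and o1: "osat m1 a" and o2: "osat m2 b" by auto
    define c where "c = cm K m"
    define c1 where "c1 = cm K m1"
    define c2 where "c2 = cm K m2"
    have csum: "\<And>k. c k = c1 k + c2 k" by (simp add: c_def c1_def c2_def mm cm_splus)
    have cfin: "\<And>k. c k < top" unfolding c_def using cm_le_1[OF sm, of K] by (metis ennreal_one_less_top le_less_trans)
    define m1' where "m1' = (\<lambda>\<sigma>. m' \<sigma> * (c1 (K \<sigma>) / c (K \<sigma>)))"
    define m2' where "m2' = (\<lambda>\<sigma>. m' \<sigma> * (c2 (K \<sigma>) / c (K \<sigma>)))"
    have split: "m' = splus m1' m2'"
    proof (rule ext)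
      fix \<sigma>
      show "m' \<sigma> = splus m1' m2' \<sigma>"
      proof (cases "c (K \<sigma>) = 0")
        case True
        then have "m' \<sigma> = 0" using cm_point[of m' \<sigma> K] eq by (simp add: c_def)
        then show ?thesis by (simp add: splus_def m1'_def m2'_def)
      next
        case False
        have "c1 (K \<sigma>) / c (K \<sigma>) + c2 (K \<sigma>) / c (K \<sigma>) = 1"
          using False cfin[of "K \<sigma>"] by (simp add: add_divide_distrib_ennreal[symmetric] csum[symmetric])
        then show ?thesis by (simp add: splus_def m1'_def m2'_def distrib_left[symmetric])
      qed
    qed
    have cmeq: "cm K mi' k = ci k" if "ci = c1 \<or> ci = c2" "mi' = (\<lambda>\<sigma>. m' \<sigma> * (ci (K \<sigma>) / c (K \<sigma>)))"
      for k ci mi'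
    proof -
      have le: "ci k \<le> c k" using that(1) csum[of k] by auto
      have "cm K mi' k = infsum (\<lambda>\<sigma>. restr m' (\<lambda>\<sigma>. K \<sigma> = k) \<sigma> * (ci k / c k)) UNIV"
        unfolding cm_def mass_def that(2) restr_def by (rule arg_cong[where f="\<lambda>f. infsum f UNIV"]) auto
      also have "\<dots> = cm K m' k * (ci k / c k)" by (simp add: ss_cmult_right cm_def mass_def)
      also have "\<dots> = c k * (ci k / c k)" using eq by (simp add: c_def)
      also have "\<dots> = ci k"
      proof (cases "c k = 0")
        case True then show ?thesis using le by simp
      next
        case False then show ?thesis using cfin[of k]
          by (simp add: ennreal_times_divide mult.commute[of "c k"] ennreal_mult_divide_eq)
      qed
      finally show ?thesis .
    qed
    have cm1: "\<forall>k. cm K m1 k = cm K m1' k" using cmeq[of c1 m1'] by (simp add: c1_def m1'_def)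
    have cm2: "\<forall>k. cm K m2 k = cm K m2' k" using cmeq[of c2 m2'] by (simp add: c2_def m2'_def)
    have sub1: "subdist m1'"
    proof -
      have "mass m1' \<le> mass m'" unfolding mass_def by (rule ss_mono) (simp add: split splus_def)
      then show ?thesis using sm' by (simp add: subdist_def)
    qed
    have sub2: "subdist m2'"
    proof -
      have "mass m2' \<le> mass m'" unfolding mass_def by (rule ss_mono) (simp add: split splus_def)
      then show ?thesis using sm' by (simp add: subdist_def)
    qed
    have "osat m1' a" using OPlus.IH(1)[OF s1 sub1 cm1 pa] o1 by simp
    moreover have "osat m2' b" using OPlus.IH(2)[OF s2 sub2 cm2 pb] o2 by simp
    ultimately show ?thesis using sub1 sub2 split by auto
  qed
  have sym: "\<forall>k. cm K \<mu>' k = cm K \<mu> k" using OPlus.prems(3) by simp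
  show ?case using dir[OF OPlus.prems(1,2,3)] dir[OF OPlus.prems(2,1) sym] by blast
qed auto



lemma ss_fiber_fun:
  assumes "finite KS" "\<And>k. k \<notin> KS \<Longrightarrow> cm K \<mu> k = 0"
  shows "infsum (\<lambda>\<sigma>. \<mu> \<sigma> * h (K \<sigma>)) UNIV = (\<Sum>k\<in>KS. cm K \<mu> k * h k)"
proof -
  have c: "cm K (\<lambda>\<sigma>. \<mu> \<sigma> * h (K \<sigma>)) k = cm K \<mu> k * h k" for k
  proof -
    have "cm K (\<lambda>\<sigma>. \<mu> \<sigma> * h (K \<sigma>)) k = infsum (\<lambda>\<sigma>. (if K \<sigma> = k then \<mu> \<sigma> else 0) * h k) UNIV"
      unfolding cm_def mass_def restr_def by (rule arg_cong[where f="\<lambda>f. infsum f UNIV"]) auto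
    also have "\<dots> = cm K \<mu> k * h k" by (simp add: ss_cmult_right cm_def mass_def restr_def)
    finally show ?thesis .
  qed
  have "infsum (\<lambda>\<sigma>. \<mu> \<sigma> * h (K \<sigma>)) UNIV = mass (\<lambda>\<sigma>. \<mu> \<sigma> * h (K \<sigma>))" by (simp add: mass_def)
  also have "\<dots> = infsum (cm K (\<lambda>\<sigma>. \<mu> \<sigma> * h (K \<sigma>))) UNIV" by (rule mass_fiber)
  also have "\<dots> = infsum (\<lambda>k. cm K \<mu> k * h k) UNIV" using c by presburger
  also have "\<dots> = (\<Sum>k\<in>KS. cm K \<mu> k * h k)" by (rule ss_finite) (use assms in auto)
  finally show ?thesis .
qed

definition mu2 :: "('a \<Rightarrow> 'k) \<Rightarrow> 'a sd \<Rightarrow> ('k \<Rightarrow> 'a) \<Rightarrow> 'a sd" where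
  "mu2 K \<mu> ch = (\<lambda>\<sigma>. if cm K \<mu> (K \<sigma>) \<noteq> 0 \<and> \<sigma> = ch (K \<sigma>) then cm K \<mu> (K \<sigma>) else 0)"

lemma mu2_cm:
  assumes "\<forall>k. cm K \<mu> k \<noteq> 0 \<longrightarrow> K (ch k) = k"
  shows "cm K (mu2 K \<mu> ch) k = cm K \<mu> k"
proof (cases "cm K \<mu> k = 0")
  case True
  have "restr (mu2 K \<mu> ch) (\<lambda>\<sigma>. K \<sigma> = k) = (\<lambda>_. 0)"
    using True by (auto simp: restr_def mu2_def intro!: ext)
  then show ?thesis using True by (simp add: cm_def mass_def)
next
  case False
  have kk: "K (ch k) = k" using assms False by blast
  have "cm K (mu2 K \<mu> ch) k = restr (mu2 K \<mu> ch) (\<lambda>\<sigma>. K \<sigma> = k) (ch k)"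
    unfolding cm_def mass_def by (rule ss_single) (auto simp: restr_def mu2_def)
  also have "\<dots> = cm K \<mu> k" using kk False by (simp add: restr_def mu2_def)
  finally show ?thesis .
qed

lemma mu2_sum:
  assumes "\<forall>k. cm K \<mu> k \<noteq> 0 \<longrightarrow> K (ch k) = k" "finite {k. cm K \<mu> k \<noteq> 0}"
  shows "infsum (\<lambda>\<sigma>. mu2 K \<mu> ch \<sigma> * f \<sigma>) UNIV = (\<Sum>k\<in>{k. cm K \<mu> k \<noteq> 0}. cm K \<mu> k * f (ch k))"
proof -
  let ?KS = "{k. cm K \<mu> k \<noteq> 0}"
  have "infsum (\<lambda>\<sigma>. mu2 K \<mu> ch \<sigma> * f \<sigma>) UNIV = (\<Sum>\<sigma>\<in>ch ` ?KS. mu2 K \<mu> ch \<sigma> * f \<sigma>)"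
    by (rule ss_finite) (use assms(2) in \<open>auto simp: mu2_def\<close>)
  also have "\<dots> = (\<Sum>k\<in>?KS. mu2 K \<mu> ch (ch k) * f (ch k))"
  proof (rule sum.reindex[unfolded comp_def])
    show "inj_on ch ?KS" using assms(1) by (metis (mono_tags, lifting) inj_onI mem_Collect_eq)
  qed
  also have "\<dots> = (\<Sum>k\<in>?KS. cm K \<mu> k * f (ch k))"
    using assms(1) by (intro sum.cong) (auto simp: mu2_def)
  finally show ?thesis .
qed


definition AA :: "(nat \<Rightarrow> 'a \<Rightarrow> bool) \<Rightarrow> nat \<Rightarrow> nat \<Rightarrow> 'a \<Rightarrow> bool" where
  "AA A n i = (if i = 0 then (\<lambda>\<sigma>. \<forall>j\<in>{1..n}. \<not> A j \<sigma>) else A i)"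

lemma AA_disj:
  assumes dis: "\<forall>i\<in>{1..n}. \<forall>j\<in>{1..n}. i \<noteq> j \<longrightarrow> (\<forall>\<sigma>. \<not> (A i \<sigma> \<and> A j \<sigma>))"
  shows "\<forall>i\<in>set [0..<n+1]. \<forall>j\<in>set [0..<n+1]. i \<noteq> j \<longrightarrow> (\<forall>\<sigma>. \<not> (AA A n i \<sigma> \<and> AA A n j \<sigma>))"
proof (intro ballI impI allI)
  fix i j \<sigma> assume i: "i \<in> set [0..<n+1]" and j: "j \<in> set [0..<n+1]" and ij: "i \<noteq> j"
  show "\<not> (AA A n i \<sigma> \<and> AA A n j \<sigma>)"
  proof (cases "i = 0")
    case True
    then have "j \<in> {1..n}" using j ij by auto
    then show ?thesis using True ij by (auto simp: AA_def)
  next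
    case False
    note i0 = False
    show ?thesis
    proof (cases "j = 0")
      case True
      then have "i \<in> {1..n}" using i ij by auto
      then show ?thesis using True ij by (auto simp: AA_def)
    next
      case False
      then have "i \<in> {1..n}" "j \<in> {1..n}" using i j i0 by auto
      then have "\<not> (A i \<sigma> \<and> A j \<sigma>)" using dis ij by blast
      then show ?thesis using i0 False by (simp add: AA_def)
    qed
  qed
qed

lemma AA_cover: "\<exists>j\<in>set [0..<n+1]. AA A n j \<sigma>"
proof (cases "\<exists>j\<in>{1..n}. A j \<sigma>")
  case True
  then obtain j where "j \<in> {1..n}" "A j \<sigma>" by blast
  then show ?thesis by (intro bexI[of _ j]) (auto simp: AA_def)
next
  case False
  then show ?thesis by (intro bexI[of _ 0]) (auto simp: AA_def)
qed

lemma q_char: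
  assumes dis: "\<forall>i\<in>{1..n}. \<forall>j\<in>{1..n}. i \<noteq> j \<longrightarrow> (\<forall>\<sigma>. \<not> (A i \<sigma> \<and> A j \<sigma>))"
    and sv: "subdist \<nu>"
  shows "osat \<nu> (big_oplus (map (\<lambda>i. OProb (AA A n i) (q i)) [0..<n+1])) \<longleftrightarrow>
    (\<forall>i\<in>{0..n}. 0 \<le> q i \<and> mass (restr \<nu> (AA A n i)) = ennreal (q i))"
proof -
  have s: "set [0..<n+1] = {0..n}" by auto
  have e: "osat \<nu> (big_oplus (map (\<lambda>i. OProb (AA A n i) (q i)) [0..<n+1])) \<longleftrightarrow>
    ((\<forall>\<sigma>. \<nu> \<sigma> \<noteq> 0 \<longrightarrow> (\<exists>j\<in>set [0..<n+1]. AA A n j \<sigma>)) \<and>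
          (\<forall>j\<in>set [0..<n+1]. 0 \<le> q j \<and> mass (restr \<nu> (AA A n j)) = ennreal (q j)))"
    by (rule BO_char[OF _ AA_disj[OF dis] sv]) simp
  show ?thesis unfolding e s using AA_cover[of n A, unfolded s] by blast
qed

lemma p_char:
  assumes dis: "\<forall>i\<in>{1..n}. \<forall>j\<in>{1..n}. i \<noteq> j \<longrightarrow> (\<forall>\<sigma>. \<not> (A i \<sigma> \<and> A j \<sigma>))"
    and pn: "\<forall>i\<in>{1..n}. 0 \<le> p i \<and> p i \<le> 1" and sv: "subdist \<nu>"
  shows "osat \<nu> (big_oplus (map (\<lambda>i. OProb (A i) (p i)) [1..<n+1])) \<longleftrightarrow>
    (\<forall>i\<in>{0..n}. mass (restr \<nu> (AA A n i)) = (if i = 0 then 0 else ennreal (p i)))"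
proof -
  have s: "set [1..<n+1] = {1..n}" by auto
  have "osat \<nu> (big_oplus (map (\<lambda>i. OProb (A i) (p i)) [1..<n+1])) \<longleftrightarrow>
    ((\<forall>\<sigma>. \<nu> \<sigma> \<noteq> 0 \<longrightarrow> (\<exists>j\<in>set [1..<n+1]. A j \<sigma>)) \<and>
          (\<forall>j\<in>set [1..<n+1]. 0 \<le> p j \<and> mass (restr \<nu> (A j)) = ennreal (p j)))"
    by (rule BO_char[OF _ _ sv]) (use dis in \<open>simp_all only: s distinct_upt\<close>)
  also have "\<dots> \<longleftrightarrow> (mass (restr \<nu> (AA A n 0)) = 0 \<and> (\<forall>j\<in>{1..n}. mass (restr \<nu> (A j)) = ennreal (p j)))"
  proof -
    have "mass (restr \<nu> (AA A n 0)) = 0 \<longleftrightarrow> (\<forall>\<sigma>. \<nu> \<sigma> \<noteq> 0 \<longrightarrow> (\<exists>j\<in>{1..n}. A j \<sigma>))"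
      unfolding mass_def ss_zero_iff by (auto simp: restr_def AA_def)
    then show ?thesis using pn s by auto
  qed
  also have "\<dots> \<longleftrightarrow> (\<forall>i\<in>{0..n}. mass (restr \<nu> (AA A n i)) = (if i = 0 then 0 else ennreal (p i)))"
  proof
    assume h: "mass (restr \<nu> (AA A n 0)) = 0 \<and> (\<forall>j\<in>{1..n}. mass (restr \<nu> (A j)) = ennreal (p j))"
    show "\<forall>i\<in>{0..n}. mass (restr \<nu> (AA A n i)) = (if i = 0 then 0 else ennreal (p i))"
    proof
      fix i assume "i \<in> {0..n}"
      then show "mass (restr \<nu> (AA A n i)) = (if i = 0 then 0 else ennreal (p i))"
        using h by (cases "i = 0") (auto simp: AA_def)
    qed
  next
    assume h: "\<forall>i\<in>{0..n}. mass (restr \<nu> (AA A n i)) = (if i = 0 then 0 else ennreal (p i))"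
    have "mass (restr \<nu> (AA A n 0)) = 0" using h by auto
    moreover have "\<forall>j\<in>{1..n}. mass (restr \<nu> (A j)) = ennreal (p j)"
    proof
      fix j assume j: "j \<in> {1..n}"
      then have "mass (restr \<nu> (AA A n j)) = ennreal (p j)" using h by force
      then show "mass (restr \<nu> (A j)) = ennreal (p j)" using j by (simp add: AA_def)
    qed
    ultimately show "mass (restr \<nu> (AA A n 0)) = 0 \<and> (\<forall>j\<in>{1..n}. mass (restr \<nu> (A j)) = ennreal (p j))" ..
  qed
  finally show ?thesis .
qed


lemma main_AA:
  fixes C :: "('x,'v) cmd" and \<phi> :: "('x,'v) state oassn"
    and A :: "nat \<Rightarrow> ('x,'v) state \<Rightarrow> bool" and p :: "nat \<Rightarrow> real" and n :: nat
  assumes tm: "terminating C"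
    and dis: "\<forall>i\<in>{1..n}. \<forall>j\<in>{1..n}. i \<noteq> j \<longrightarrow> (\<forall>\<sigma>. \<not> (A i \<sigma> \<and> A j \<sigma>))"
    and pn: "\<forall>i\<in>{1..n}. 0 \<le> p i \<and> p i \<le> 1"
  shows "(\<not> ol_valid \<phi> C (big_oplus (map (\<lambda>i. OProb (A i) (p i)) [1..<n+1])))
     \<longleftrightarrow> (\<exists>q :: nat \<Rightarrow> real. \<exists>\<phi>'. (\<forall>i\<in>{0..n}. 0 \<le> q i \<and> q i \<le> 1)
            \<and> oentails \<phi>' \<phi> \<and> satisfiable \<phi>'
            \<and> ol_valid \<phi>' C (big_oplus (map (\<lambda>i. OProb (AA A n i) (q i)) [0..<n+1]))
            \<and> (q 0 \<noteq> 0 \<or> (\<exists>i\<in>{1..n}. q i \<noteq> p i)))"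
proof -
  have semm: "\<And>\<sigma>. mass (sem C \<sigma>) \<le> 1" using sem_mass[OF tm] .
  have subout: "subdist (sbind \<mu> (sem C))" if "subdist \<mu>" for \<mu>
  proof -
    have "mass (sbind \<mu> (sem C)) \<le> mass \<mu>" by (rule mass_sbind_le[OF semm])
    moreover have "mass \<mu> \<le> 1" using that by (simp add: subdist_def)
    ultimately show ?thesis unfolding subdist_def by (rule order_trans)
  qed
  define t where "t i = (if i = 0 then 0 else ennreal (p i))" for i
  show ?thesis
  proof
    assume nv: "\<not> ol_valid \<phi> C (big_oplus (map (\<lambda>i. OProb (A i) (p i)) [1..<n+1]))"
    then obtain \<mu> where sm: "subdist \<mu>" and om: "osat \<mu> \<phi>"
      and no: "\<not> osat (sbind \<mu> (sem C)) (big_oplus (map (\<lambda>i. OProb (A i) (p i)) [1..<n+1]))"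
      unfolding ol_valid_def by blast
    define \<nu> where "\<nu> = sbind \<mu> (sem C)"
    have s\<nu>: "subdist \<nu>" using subout[OF sm] by (simp add: \<nu>_def)
    define K where "K = (\<lambda>\<sigma>. map (\<lambda>B. B \<sigma>) (preds \<phi>))"
    have KP: "\<forall>B\<in>set (preds \<phi>). \<forall>\<sigma> \<tau>. K \<sigma> = K \<tau> \<longrightarrow> (B \<sigma> \<longleftrightarrow> B \<tau>)"
      unfolding K_def by (auto simp: map_eq_conv)
    define KS where "KS = {k. cm K \<mu> k \<noteq> 0}"
    have fibex: "\<exists>\<sigma>. K \<sigma> = k \<and> \<mu> \<sigma> \<noteq> 0" if "cm K \<mu> k \<noteq> 0" for k
    proof (rule ccontr)
      assume "\<not> ?thesis"
      then have "\<forall>\<sigma>. restr \<mu> (\<lambda>\<sigma>. K \<sigma> = k) \<sigma> = 0" by (auto simp: restr_def)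
      then have "cm K \<mu> k = 0" unfolding cm_def mass_def using ss_zero_iff by blast
      then show False using that by simp
    qed
    have finKS: "finite KS"
    proof (rule finite_subset)
      show "KS \<subseteq> {xs. set xs \<subseteq> UNIV \<and> length xs = length (preds \<phi>)}"
      proof
        fix k assume "k \<in> KS"
        then obtain \<sigma> where "K \<sigma> = k" using fibex by (auto simp: KS_def)
        then show "k \<in> {xs. set xs \<subseteq> UNIV \<and> length xs = length (preds \<phi>)}" by (auto simp: K_def)
      qed
      show "finite {xs. set xs \<subseteq> (UNIV::bool set) \<and> length xs = length (preds \<phi>)}"
        by (rule finite_lists_length_eq) simp
    qed
    have inKS: "K \<sigma> \<in> KS" if "\<mu> \<sigma> \<noteq> 0" for \<sigma>
      using cm_point[of \<mu> \<sigma> K] that by (auto simp: KS_def)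
    have cmle: "\<And>k. cm K \<mu> k \<le> 1" using cm_le_1[OF sm] .
    have cmfin: "\<And>k. cm K \<mu> k < top" using cmle by (metis ennreal_one_less_top le_less_trans)
    define valid where "valid ch \<longleftrightarrow> (\<forall>k. cm K \<mu> k \<noteq> 0 \<longrightarrow> K (ch k) = k \<and> \<mu> (ch k) \<noteq> 0)" for ch
    define g where "g P \<sigma> = mass (restr (sem C \<sigma>) P)" for P \<sigma>
    have g_le: "g P \<sigma> \<le> 1" for P \<sigma> unfolding g_def by (rule order_trans[OF mass_restr_le semm])
    have out_mass: "mass (restr (sbind (mu2 K \<mu> ch) (sem C)) P) = (\<Sum>k\<in>KS. cm K \<mu> k * g P (ch k))"
      if "valid ch" for ch P
    proof -
      have v: "\<forall>k. cm K \<mu> k \<noteq> 0 \<longrightarrow> K (ch k) = k" using that by (simp add: valid_def)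
      show ?thesis unfolding mass_restr_sbind g_def KS_def
        by (rule mu2_sum[OF v]) (use finKS in \<open>simp add: KS_def\<close>)
    qed
    have mu2_props: "subdist (mu2 K \<mu> ch) \<and> osat (mu2 K \<mu> ch) \<phi>" if "valid ch" for ch
    proof -
      have v: "\<forall>k. cm K \<mu> k \<noteq> 0 \<longrightarrow> K (ch k) = k" using that by (simp add: valid_def)
      have ce: "cm K (mu2 K \<mu> ch) = cm K \<mu>" using mu2_cm[OF v] by (auto intro!: ext)
      have "mass (mu2 K \<mu> ch) = mass \<mu>" by (simp only: mass_fiber[of _ K] ce)
      then have s2: "subdist (mu2 K \<mu> ch)" using sm by (simp add: subdist_def)
      have "osat (mu2 K \<mu> ch) \<phi>" using osat_inv[OF KP sm s2] ce om by simp
      then show ?thesis using s2 by simp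
    qed
    have ex_ch: "\<exists>ch. valid ch \<and> \<not> (\<forall>i\<in>{0..n}. mass (restr (sbind (mu2 K \<mu> ch) (sem C)) (AA A n i)) = t i)"
    proof (rule ccontr)
      assume "\<not> ?thesis"
      then have allT: "\<And>ch i. valid ch \<Longrightarrow> i \<in> {0..n} \<Longrightarrow> (\<Sum>k\<in>KS. cm K \<mu> k * g (AA A n i) (ch k)) = t i"
        using out_mass by auto
      define ch0 where "ch0 k = (SOME \<sigma>. K \<sigma> = k \<and> \<mu> \<sigma> \<noteq> 0)" for k
      have v0: "valid ch0" unfolding valid_def
      proof (intro allI impI)
        fix k assume "cm K \<mu> k \<noteq> 0"
        then show "K (ch0 k) = k \<and> \<mu> (ch0 k) \<noteq> 0"
          unfolding ch0_def by (rule someI_ex[OF fibex])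
      qed
      have const: "g (AA A n i) \<sigma> = g (AA A n i) (ch0 (K \<sigma>))" if i: "i \<in> {0..n}" and m\<sigma>: "\<mu> \<sigma> \<noteq> 0" for i \<sigma>
      proof -
        define k where "k = K \<sigma>"
        have kKS: "k \<in> KS" using inKS[OF m\<sigma>] by (simp add: k_def)
        define ch1 where "ch1 = ch0(k := \<sigma>)"
        have v1: "valid ch1" using v0 m\<sigma> by (auto simp: valid_def ch1_def k_def)
        let ?G = "g (AA A n i)"
        have split: "(\<Sum>k'\<in>KS. cm K \<mu> k' * ?G (ch k')) = cm K \<mu> k * ?G (ch k) + (\<Sum>k'\<in>KS-{k}. cm K \<mu> k' * ?G (ch k'))" for ch
          by (rule sum.remove[OF finKS kKS])
        have rest: "(\<Sum>k'\<in>KS-{k}. cm K \<mu> k' * ?G (ch1 k')) = (\<Sum>k'\<in>KS-{k}. cm K \<mu> k' * ?G (ch0 k'))"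
          by (rule sum.cong) (auto simp: ch1_def)
        have tle: "cm K \<mu> k' * ?G x \<le> 1" for k' x
          using mult_mono[OF cmle[of k'] g_le[of "AA A n i" x]] by simp
        have fin: "(\<Sum>k'\<in>KS-{k}. cm K \<mu> k' * ?G (ch0 k')) \<noteq> top"
        proof -
          have "\<forall>k'\<in>KS-{k}. cm K \<mu> k' * ?G (ch0 k') < top"
            using tle by (metis ennreal_one_less_top le_less_trans)
          then show ?thesis using finKS by (simp add: less_top[symmetric])
        qed
        have "cm K \<mu> k * ?G (ch1 k) + (\<Sum>k'\<in>KS-{k}. cm K \<mu> k' * ?G (ch1 k'))
            = cm K \<mu> k * ?G (ch0 k) + (\<Sum>k'\<in>KS-{k}. cm K \<mu> k' * ?G (ch0 k'))"
          using split[of ch1] split[of ch0] allT[OF v1 i] allT[OF v0 i] by simp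
        then have "(\<Sum>k'\<in>KS-{k}. cm K \<mu> k' * ?G (ch0 k')) + cm K \<mu> k * ?G \<sigma>
            = (\<Sum>k'\<in>KS-{k}. cm K \<mu> k' * ?G (ch0 k')) + cm K \<mu> k * ?G (ch0 k)"
          unfolding rest by (simp add: ch1_def add.commute)
        then have "cm K \<mu> k * ?G \<sigma> = cm K \<mu> k * ?G (ch0 k)"
          using fin by (simp add: ennreal_add_left_cancel)
        moreover have "cm K \<mu> k \<noteq> 0" using kKS by (simp add: KS_def)
        moreover have "cm K \<mu> k \<noteq> top" using cmfin[of k] by simp
        ultimately have "?G \<sigma> = ?G (ch0 k)" by (simp add: ennreal_mult_cancel_left)
        then show ?thesis by (simp add: k_def)
      qed
      have "\<forall>i\<in>{0..n}. mass (restr \<nu> (AA A n i)) = (if i = 0 then 0 else ennreal (p i))"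
      proof
        fix i assume i: "i \<in> {0..n}"
        have pt: "\<mu> \<sigma> * g (AA A n i) \<sigma> = \<mu> \<sigma> * g (AA A n i) (ch0 (K \<sigma>))" for \<sigma>
          by (cases "\<mu> \<sigma> = 0") (simp_all add: const[OF i])
        have "mass (restr \<nu> (AA A n i)) = infsum (\<lambda>\<sigma>. \<mu> \<sigma> * g (AA A n i) \<sigma>) UNIV"
          unfolding \<nu>_def g_def by (rule mass_restr_sbind)
        also have "\<dots> = infsum (\<lambda>\<sigma>. \<mu> \<sigma> * g (AA A n i) (ch0 (K \<sigma>))) UNIV" by (simp only: pt)
        also have "\<dots> = (\<Sum>k\<in>KS. cm K \<mu> k * g (AA A n i) (ch0 k))"
          by (rule ss_fiber_fun[OF finKS]) (simp add: KS_def)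
        also have "\<dots> = t i" by (rule allT[OF v0 i])
        finally show "mass (restr \<nu> (AA A n i)) = (if i = 0 then 0 else ennreal (p i))" by (simp add: t_def)
      qed
      then have "osat \<nu> (big_oplus (map (\<lambda>i. OProb (A i) (p i)) [1..<n+1]))"
        using p_char[OF dis pn s\<nu>] by simp
      then show False using no by (simp add: \<nu>_def)
    qed
    then obtain ch where vch: "valid ch"
      and nT: "\<not> (\<forall>i\<in>{0..n}. mass (restr (sbind (mu2 K \<mu> ch) (sem C)) (AA A n i)) = t i)" by blast
    have vk: "\<And>k. k \<in> KS \<Longrightarrow> K (ch k) = k" using vch by (simp add: valid_def KS_def)
    define \<mu>2 where "\<mu>2 = mu2 K \<mu> ch"
    define \<nu>2 where "\<nu>2 = sbind \<mu>2 (sem C)"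
    have s\<mu>2: "subdist \<mu>2" and o\<mu>2: "osat \<mu>2 \<phi>" using mu2_props[OF vch] by (simp_all add: \<mu>2_def)
    have s\<nu>2: "subdist \<nu>2" using subout[OF s\<mu>2] by (simp add: \<nu>2_def)
    obtain ks where ks: "distinct ks" "set ks = KS" using finite_distinct_list[OF finKS] by blast
    define \<psi> where "\<psi> = big_oplus (map (\<lambda>k. OProb (\<lambda>\<sigma>. \<sigma> = ch k) (enn2real (cm K \<mu> k))) ks)"
    define q where "q i = enn2real (mass (restr \<nu>2 (AA A n i)))" for i
    have \<nu>2le: "mass (restr \<nu>2 P) \<le> 1" for P
      using s\<nu>2 unfolding subdist_def by (rule order_trans[OF mass_restr_le])
    have \<nu>2fin: "mass (restr \<nu>2 P) < top" for P
      using \<nu>2le by (metis ennreal_one_less_top le_less_trans)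
    have kdis: "\<forall>i\<in>set ks. \<forall>j\<in>set ks. i \<noteq> j \<longrightarrow> (\<forall>\<sigma>. \<not> (\<sigma> = ch i \<and> \<sigma> = ch j))"
      using vk ks(2) by metis
    have \<psi>char: "osat m \<psi> \<longleftrightarrow> ((\<forall>\<sigma>. m \<sigma> \<noteq> 0 \<longrightarrow> (\<exists>k\<in>KS. \<sigma> = ch k)) \<and>
        (\<forall>k\<in>KS. mass (restr m (\<lambda>\<sigma>. \<sigma> = ch k)) = cm K \<mu> k))" if "subdist m" for m
    proof -
      have "osat m \<psi> \<longleftrightarrow> ((\<forall>\<sigma>. m \<sigma> \<noteq> 0 \<longrightarrow> (\<exists>k\<in>set ks. \<sigma> = ch k)) \<and>
        (\<forall>k\<in>set ks. 0 \<le> enn2real (cm K \<mu> k) \<and> mass (restr m (\<lambda>\<sigma>. \<sigma> = ch k)) = ennreal (enn2real (cm K \<mu> k))))"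
        unfolding \<psi>_def by (rule BO_char[OF ks(1) kdis that])
      then show ?thesis using cmfin ks(2) by simp
    qed
    have pt\<mu>2: "mass (restr m (\<lambda>\<sigma>. \<sigma> = x)) = m x" for m :: "('x,'v) state sd" and x
      unfolding mass_def by (subst ss_single[of x]) (auto simp: restr_def)
    have \<mu>2\<psi>: "osat \<mu>2 \<psi>"
      unfolding \<psi>char[OF s\<mu>2] pt\<mu>2
      using vk by (auto simp: \<mu>2_def mu2_def KS_def)
    have uniq: "m = \<mu>2" if sm': "subdist m" and om': "osat m \<psi>" for m
    proof (rule ext)
      fix \<sigma>
      have h: "\<forall>\<sigma>. m \<sigma> \<noteq> 0 \<longrightarrow> (\<exists>k\<in>KS. \<sigma> = ch k)" "\<forall>k\<in>KS. m (ch k) = cm K \<mu> k"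
        using om' unfolding \<psi>char[OF sm'] pt\<mu>2 by auto
      show "m \<sigma> = \<mu>2 \<sigma>"
      proof (cases "\<exists>k\<in>KS. \<sigma> = ch k")
        case True
        then obtain k where k: "k \<in> KS" "\<sigma> = ch k" by blast
        then show ?thesis using h(2) vk[OF k(1)] by (auto simp: \<mu>2_def mu2_def KS_def)
      next
        case False
        then have "m \<sigma> = 0" using h(1) by blast
        moreover have "\<mu>2 \<sigma> = 0" using False by (auto simp: \<mu>2_def mu2_def KS_def)
        ultimately show ?thesis by simp
      qed
    qed
    show "\<exists>q :: nat \<Rightarrow> real. \<exists>\<phi>'. (\<forall>i\<in>{0..n}. 0 \<le> q i \<and> q i \<le> 1)
            \<and> oentails \<phi>' \<phi> \<and> satisfiable \<phi>'
            \<and> ol_valid \<phi>' C (big_oplus (map (\<lambda>i. OProb (AA A n i) (q i)) [0..<n+1]))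
            \<and> (q 0 \<noteq> 0 \<or> (\<exists>i\<in>{1..n}. q i \<noteq> p i))"
    proof (intro exI[of _ q] exI[of _ "OAnd \<phi> \<psi>"] conjI)
      show "\<forall>i\<in>{0..n}. 0 \<le> q i \<and> q i \<le> 1"
        using \<nu>2le by (auto simp: q_def intro: enn2real_leI)
      show "oentails (OAnd \<phi> \<psi>) \<phi>" by (simp add: oentails_def)
      show "satisfiable (OAnd \<phi> \<psi>)" unfolding satisfiable_def using s\<mu>2 o\<mu>2 \<mu>2\<psi> by auto
      have qe: "mass (restr \<nu>2 (AA A n i)) = ennreal (q i)" for i
        using \<nu>2fin by (simp add: q_def)
      show "ol_valid (OAnd \<phi> \<psi>) C (big_oplus (map (\<lambda>i. OProb (AA A n i) (q i)) [0..<n+1]))"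
        unfolding ol_valid_def
      proof (intro allI impI)
        fix m assume sm': "subdist m" and om': "osat m (OAnd \<phi> \<psi>)"
        then have "m = \<mu>2" using uniq by auto
        then have e: "sbind m (sem C) = \<nu>2" by (simp add: \<nu>2_def)
        show "osat (sbind m (sem C)) (big_oplus (map (\<lambda>i. OProb (AA A n i) (q i)) [0..<n+1]))"
          unfolding e q_char[OF dis s\<nu>2] using qe by (simp add: q_def)
      qed
      show "q 0 \<noteq> 0 \<or> (\<exists>i\<in>{1..n}. q i \<noteq> p i)"
      proof (rule ccontr)
        assume "\<not> ?thesis"
        then have q0: "q 0 = 0" and qp: "\<forall>i\<in>{1..n}. q i = p i" by auto
        have "\<forall>i\<in>{0..n}. mass (restr \<nu>2 (AA A n i)) = t i"
        proof
          fix i assume i: "i \<in> {0..n}"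
          show "mass (restr \<nu>2 (AA A n i)) = t i"
          proof (cases "i = 0")
            case True then show ?thesis using qe[of 0] q0 by (simp add: t_def)
          next
            case False then have "i \<in> {1..n}" using i by auto
            then show ?thesis using qe[of i] qp False by (simp add: t_def)
          qed
        qed
        then show False using nT by (simp add: \<nu>2_def \<mu>2_def)
      qed
    qed
  next
    assume "\<exists>q :: nat \<Rightarrow> real. \<exists>\<phi>'. (\<forall>i\<in>{0..n}. 0 \<le> q i \<and> q i \<le> 1)
            \<and> oentails \<phi>' \<phi> \<and> satisfiable \<phi>'
            \<and> ol_valid \<phi>' C (big_oplus (map (\<lambda>i. OProb (AA A n i) (q i)) [0..<n+1]))
            \<and> (q 0 \<noteq> 0 \<or> (\<exists>i\<in>{1..n}. q i \<noteq> p i))"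
    then obtain q \<phi>' where qr: "\<forall>i\<in>{0..n}. 0 \<le> q i \<and> q i \<le> 1" and ent: "oentails \<phi>' \<phi>"
      and sat: "satisfiable \<phi>'" and val: "ol_valid \<phi>' C (big_oplus (map (\<lambda>i. OProb (AA A n i) (q i)) [0..<n+1]))"
      and dq: "q 0 \<noteq> 0 \<or> (\<exists>i\<in>{1..n}. q i \<noteq> p i)" by blast
    show "\<not> ol_valid \<phi> C (big_oplus (map (\<lambda>i. OProb (A i) (p i)) [1..<n+1]))"
    proof
      assume vp: "ol_valid \<phi> C (big_oplus (map (\<lambda>i. OProb (A i) (p i)) [1..<n+1]))"
      obtain \<mu> where sm: "subdist \<mu>" and om': "osat \<mu> \<phi>'" using sat by (auto simp: satisfiable_def)
      then have om: "osat \<mu> \<phi>" using ent by (simp add: oentails_def)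
      define \<nu> where "\<nu> = sbind \<mu> (sem C)"
      have s\<nu>: "subdist \<nu>" using subout[OF sm] by (simp add: \<nu>_def)
      have oq: "osat \<nu> (big_oplus (map (\<lambda>i. OProb (AA A n i) (q i)) [0..<n+1]))"
        using val sm om' by (simp add: ol_valid_def \<nu>_def)
      have op: "osat \<nu> (big_oplus (map (\<lambda>i. OProb (A i) (p i)) [1..<n+1]))"
        using vp sm om by (simp add: ol_valid_def \<nu>_def)
      have Q: "\<forall>i\<in>{0..n}. 0 \<le> q i \<and> mass (restr \<nu> (AA A n i)) = ennreal (q i)"
        using oq q_char[OF dis s\<nu>] by simp
      have P: "\<forall>i\<in>{0..n}. mass (restr \<nu> (AA A n i)) = (if i = 0 then 0 else ennreal (p i))"
        using op p_char[OF dis pn s\<nu>] by simp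
      have "q 0 = 0" using Q[rule_format, of 0] P[rule_format, of 0] by (auto simp: ennreal_eq_0_iff)
      moreover have "q i = p i" if i: "i \<in> {1..n}" for i
      proof -
        have "ennreal (q i) = ennreal (p i)" using Q P i by force
        then show ?thesis using qr pn i by auto
      qed
      ultimately show False using dq by blast
    qed
  qed
qed

theorem theorem5p10:
  fixes C :: "('x,'v) cmd" and \<phi> :: "('x,'v) state oassn"
    and A :: "nat \<Rightarrow> ('x,'v) state \<Rightarrow> bool" and p :: "nat \<Rightarrow> real" and n :: nat
  assumes "wf_cmd C" and "terminating C"
    and "\<forall>i\<in>{1..n}. \<forall>j\<in>{1..n}. i \<noteq> j \<longrightarrow> (\<forall>\<sigma>. \<not> (A i \<sigma> \<and> A j \<sigma>))"
    and "\<forall>i\<in>{1..n}. 0 \<le> p i \<and> p i \<le> 1"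
  shows "(\<not> ol_valid \<phi> C (big_oplus (map (\<lambda>i. OProb (A i) (p i)) [1..<n+1])))
     \<longleftrightarrow> (\<exists>q :: nat \<Rightarrow> real. \<exists>\<phi>'. (\<forall>i\<in>{0..n}. 0 \<le> q i \<and> q i \<le> 1)
            \<and> oentails \<phi>' \<phi> \<and> satisfiable \<phi>'
            \<and> ol_valid \<phi>' C (big_oplus (map (\<lambda>i. OProb
                  (if i = 0 then (\<lambda>\<sigma>. \<forall>j\<in>{1..n}. \<not> A j \<sigma>) else A i) (q i)) [0..<n+1]))
            \<and> (q 0 \<noteq> 0 \<or> (\<exists>i\<in>{1..n}. q i \<noteq> p i)))"
  using main_AA[OF assms(2) assms(3) assms(4), of \<phi>] unfolding AA_def .

end
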